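(* Let $G$ be an acyclic mixed graph with mixed components $G_1,\dots,G_k$. If $G$ is HTC-identifiable, then every $G_j$ is HTC-identifiable. Moreover, $G$ is HTC-infinite-to-one if and only if some $G_j$ is HTC-infinite-to-one.
   Context: A mixed graph is $G=(V,D,B)$ with $V$ a finite node set, $D$ directed edges $v\to w$, $B$ symmetric bidirected edges $v\leftrightarrow w$, no self-loops; acyclic if $(V,D)$ has no directed cycle. $\mathrm{pa}(v)=\{w:w\to v\in D\}$, $\mathrm{sib}(v)=\{w:w\leftrightarrow v\in B\}$. A half-trek from $y$ to $w$ is a path $y\leftrightarrow w_0\to w_1\to\cdots\to w_r=w$ (left side $\{y\}$, right side $\{w_0,\dots,w_r\}$) or $y\to w_1\to\cdots\to w_r=w$, $r\ge0$ (left side $\{y\}$, right side $\{y,w_1,\dots,w_r\}$). $\mathrm{htr}(v)$ is the set of $w\in V\setminus(\{v\}\cup\mathrm{sib}(v))$ reachable from $v$ by a half-trek. A system of half-treks from $X$ to $Y$: half-treks with distinct sources forming $X$ and distinct targets forming $Y$; no sided intersection: pairwise disjoint left sides and pairwise disjoint right sides. $Y$ satisfies the half-trek criterion w.r.t. $v$ if $|Y|=|\mathrm{pa}(v)|$, $Y\cap(\{v\}\cup\mathrm{sib}(v))=\emptyset$, and there is a system of half-treks with no sided intersection from $Y$ to $\mathrm{pa}(v)$. $G$ is HTC-identifiable if there exist $(Y_v:v\in V)$, each satisfying the half-trek criterion w.r.t. $v$, and a total order $\prec$ on $V$ with $w\prec v$ whenever $w\in Y_v\cap\mathrm{htr}(v)$.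 $G$ is HTC-infinite-to-one if every family $(Y_v:v\in V)$ of subsets of $V$ either contains some $Y_v$ failing the half-trek criterion w.r.t. $v$ or contains a pair with $v\in Y_w$ and $w\in Y_v$. Mixed components: let $C_1,\dots,C_k$ be the node sets of the connected components of $(V,B)$. For $j\in[k]$ let $V_j=C_j\cup\bigcup_{v\in C_j}\mathrm{pa}(v)$, $D_j=\{v\to w\in D: v\in V_j, w\in C_j\}$, $B_j=B\cap(C_j\times C_j)$, and $G_j=(V_j,D_j,B_j)$ (all notions above are applied to $G_j$ with node set $V_j$). *)

theory Defs
  imports Main
begin

record 'a mgraph =
  nodes  :: "'a set"
  dedges :: "('a \<times> 'a) set"
  bedges :: "('a \<times> 'a) set"

definition mixed_graph :: "'a mgraph \<Rightarrow> bool" where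
  "mixed_graph G \<longleftrightarrow> finite (nodes G)
     \<and> dedges G \<subseteq> nodes G \<times> nodes G \<and> bedges G \<subseteq> nodes G \<times> nodes G
     \<and> sym (bedges G)
     \<and> (\<forall>v. (v, v) \<notin> dedges G) \<and> (\<forall>v. (v, v) \<notin> bedges G)"

definition acyclic_mg :: "'a mgraph \<Rightarrow> bool" where
  "acyclic_mg G \<longleftrightarrow> acyclic (dedges G)"

definition pa :: "'a mgraph \<Rightarrow> 'a \<Rightarrow> 'a set" where
  "pa G v = {w. (w, v) \<in> dedges G}"

definition sib :: "'a mgraph \<Rightarrow> 'a \<Rightarrow> 'a set" where
  "sib G v = {w. (w, v) \<in> bedges G}"

text \<open>A half-trek with source y is encoded by a flag b and the list rs of its right-side
  nodes in order.  If b, it is  y <-> rs!0 -> rs!1 -> ... -> last rs  (right side = set rs);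
  if not b, then rs!0 = y and it is  y -> rs!1 -> ... -> last rs  (right side = set rs,
  which contains y; rs = [y] is the trivial half-trek).  The left side is {y} and the target
  is last rs.\<close>

definition is_htrek :: "'a mgraph \<Rightarrow> 'a \<Rightarrow> bool \<Rightarrow> 'a list \<Rightarrow> bool" where
  "is_htrek G y b rs \<longleftrightarrow> rs \<noteq> [] \<and> y \<in> nodes G \<and> set rs \<subseteq> nodes G
     \<and> successively (\<lambda>u w. (u, w) \<in> dedges G) rs
     \<and> (if b then (y, hd rs) \<in> bedges G else hd rs = y)"

definition htr :: "'a mgraph \<Rightarrow> 'a \<Rightarrow> 'a set" where
  "htr G v = {w \<in> nodes G - ({v} \<union> sib G v).
               \<exists>b rs. is_htrek G v b rs \<and> last rs = w}"

text \<open>A system of half-treks from X to Y with no sided intersection: one half-trek h x with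
  source x for each x in X, the targets form Y bijectively, and right sides pairwise disjoint
  (left sides {x} are then automatically pairwise disjoint).\<close>

definition htrek_system :: "'a mgraph \<Rightarrow> 'a set \<Rightarrow> 'a set \<Rightarrow> bool" where
  "htrek_system G X Y \<longleftrightarrow> (\<exists>h :: 'a \<Rightarrow> bool \<times> 'a list.
      (\<forall>x\<in>X. is_htrek G x (fst (h x)) (snd (h x)))
    \<and> bij_betw (\<lambda>x. last (snd (h x))) X Y
    \<and> (\<forall>x\<in>X. \<forall>x'\<in>X. x \<noteq> x' \<longrightarrow> set (snd (h x)) \<inter> set (snd (h x')) = {}))"

definition HTC :: "'a mgraph \<Rightarrow> 'a set \<Rightarrow> 'a \<Rightarrow> bool" where
  "HTC G Y v \<longleftrightarrow> Y \<subseteq> nodes G \<and> card Y = card (pa G v)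
     \<and> Y \<inter> ({v} \<union> sib G v) = {} \<and> htrek_system G Y (pa G v)"

definition HTC_identifiable :: "'a mgraph \<Rightarrow> bool" where
  "HTC_identifiable G \<longleftrightarrow> (\<exists>(Y :: 'a \<Rightarrow> 'a set) r.
      strict_linear_order_on (nodes G) r
    \<and> (\<forall>v\<in>nodes G. HTC G (Y v) v \<and> (\<forall>w \<in> Y v \<inter> htr G v. (w, v) \<in> r)))"

definition HTC_infinite_to_one :: "'a mgraph \<Rightarrow> bool" where
  "HTC_infinite_to_one G \<longleftrightarrow> (\<forall>Y :: 'a \<Rightarrow> 'a set. (\<forall>v\<in>nodes G. Y v \<subseteq> nodes G) \<longrightarrow>
      (\<exists>v\<in>nodes G. \<not> HTC G (Y v) v)
    \<or> (\<exists>v\<in>nodes G. \<exists>w\<in>nodes G. v \<in> Y w \<and> w \<in> Y v))"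

definition mixed_comps :: "'a mgraph \<Rightarrow> 'a set set" where
  "mixed_comps G = {C. \<exists>v\<in>nodes G. C = {w \<in> nodes G. (v, w) \<in> (bedges G)\<^sup>*}}"

definition comp_graph :: "'a mgraph \<Rightarrow> 'a set \<Rightarrow> 'a mgraph" where
  "comp_graph G C =
     (let VC = C \<union> (\<Union>v\<in>C. pa G v) in
      \<lparr> nodes = VC,
        dedges = {(v, w) \<in> dedges G. v \<in> VC \<and> w \<in> C},
        bedges = bedges G \<inter> (C \<times> C) \<rparr>)"

end

theory Submission
  imports Defs
begin

lemma succ_restrict:
  "successively (\<lambda>u w. (u,w) \<in> D) xs \<Longrightarrow> set xs \<subseteq> A \<Longrightarrow> set (tl xs) \<subseteq> C \<Longrightarrow>
   successively (\<lambda>u w. (u,w) \<in> {(v,w)\<in>D. v \<in> A \<and> w \<in> C}) xs"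
  by (induction xs rule: induct_list012) auto

lemma succ_rtrancl:
  "successively (\<lambda>u w. (u,w) \<in> R) xs \<Longrightarrow> xs \<noteq> [] \<Longrightarrow> (hd xs, last xs) \<in> R\<^sup>*"
proof (induction xs rule: induct_list012)
  case (3 x y zs)
  then have "(y, last (y#zs)) \<in> R\<^sup>*" by simp
  with 3 show ?case by auto
qed auto

locale comp_ctx =
  fixes G :: "'a mgraph" and C :: "'a set"
  assumes mg: "mixed_graph G" and CC: "C \<subseteq> nodes G"
    and closed: "\<And>u x. u \<in> C \<Longrightarrow> (u,x) \<in> bedges G \<Longrightarrow> x \<in> C"
begin

abbreviation "GC \<equiv> comp_graph G C"

lemma D_sub: "dedges G \<subseteq> nodes G \<times> nodes G" and B_sub: "bedges G \<subseteq> nodes G \<times> nodes G"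
  and symB: "sym (bedges G)"
  using mg unfolding mixed_graph_def by auto

lemma closed2: "u \<in> C \<Longrightarrow> (x,u) \<in> bedges G \<Longrightarrow> x \<in> C"
  using symB closed by (meson symD)

lemma nodes_GC: "nodes GC = C \<union> (\<Union>v\<in>C. pa G v)"
  and dedges_GC: "dedges GC = {(v, w) \<in> dedges G. v \<in> nodes GC \<and> w \<in> C}"
  and bedges_GC: "bedges GC = bedges G \<inter> (C \<times> C)"
  by (simp_all add: comp_graph_def Let_def)

lemma nodes_sub: "nodes GC \<subseteq> nodes G"
  using CC D_sub unfolding nodes_GC pa_def by auto

lemma pa_eq: "v \<in> C \<Longrightarrow> pa GC v = pa G v"
  unfolding pa_def dedges_GC nodes_GC by auto

lemma pa_empty: "v \<notin> C \<Longrightarrow> pa GC v = {}"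
  unfolding pa_def dedges_GC by auto

lemma sib_eq: "v \<in> C \<Longrightarrow> sib GC v = sib G v"
  unfolding sib_def bedges_GC using closed2 by auto

lemma sib_sub: "v \<in> C \<Longrightarrow> sib G v \<subseteq> C"
  unfolding sib_def using closed2 by auto

lemma htrek_mono: "is_htrek GC y b rs \<Longrightarrow> is_htrek G y b rs"
  unfolding is_htrek_def using nodes_sub
  by (auto simp: dedges_GC bedges_GC elim!: successively_mono split: if_splits)

lemma htr_sub: "v \<in> C \<Longrightarrow> htr GC v \<subseteq> htr G v"
  unfolding htr_def using nodes_sub htrek_mono sib_eq by fastforce

lemma HTC_lift: assumes "v \<in> C" "HTC GC Y v" shows "HTC G Y v"
proof -
  have "htrek_system GC Y (pa G v)" using assms pa_eq unfolding HTC_def by auto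
  then have "htrek_system G Y (pa G v)" unfolding htrek_system_def using htrek_mono by blast
  then show ?thesis using assms nodes_sub pa_eq sib_eq unfolding HTC_def by auto
qed

lemma HTC_empty: "v \<notin> C \<Longrightarrow> HTC GC {} v"
  unfolding HTC_def htrek_system_def using pa_empty by (auto simp: bij_betw_def)

lemma src_path: assumes "v \<in> C" "HTC GC Y v" "y \<in> Y" "y \<notin> C"
  shows "(y, v) \<in> (dedges G)\<^sup>+"
proof -
  from assms obtain h where h: "\<forall>x\<in>Y. is_htrek GC x (fst (h x)) (snd (h x))"
    "bij_betw (\<lambda>x. last (snd (h x))) Y (pa GC v)"
    unfolding HTC_def htrek_system_def by blast
  let ?rs = "snd (h y)"
  have ht: "is_htrek GC y (fst (h y)) ?rs" using h assms by auto
  have "last ?rs \<in> pa G v" using h(2) assms pa_eq by (auto dest: bij_betwE)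
  then have e: "(last ?rs, v) \<in> dedges G" unfolding pa_def by auto
  have "\<not> fst (h y)"
  proof
    assume "fst (h y)"
    then have "(y, hd ?rs) \<in> bedges GC" using ht unfolding is_htrek_def by auto
    then show False using assms(4) unfolding bedges_GC by auto
  qed
  then have "hd ?rs = y" "?rs \<noteq> []" "successively (\<lambda>u w. (u,w) \<in> dedges GC) ?rs"
    using ht unfolding is_htrek_def by auto
  then have "successively (\<lambda>u w. (u,w) \<in> dedges G) ?rs"
    by (auto simp: dedges_GC elim!: successively_mono)
  then have "(y, last ?rs) \<in> (dedges G)\<^sup>*" using succ_rtrancl \<open>hd ?rs = y\<close> \<open>?rs \<noteq> []\<close> by metis
  with e show ?thesis by auto
qed

lemma trunc_one:
  assumes v: "v \<in> C" and ht: "is_htrek G y b rs" and lp: "last rs \<in> pa G v"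
  shows "\<exists>y' b' rs'. is_htrek GC y' b' rs' \<and> last rs' = last rs \<and> set rs' \<subseteq> set rs
           \<and> ((y' \<in> set rs \<and> y' \<notin> C) \<or> (y' = y \<and> y \<in> C))"
proof -
  define bs where "bs = rev (takeWhile (\<lambda>x. x\<in>C) (rev rs))"
  define as where "as = rev (dropWhile (\<lambda>x. x\<in>C) (rev rs))"
  have rs: "rs = as @ bs" unfolding as_def bs_def
    by (metis rev_append rev_rev_ident takeWhile_dropWhile_id)
  have bsC: "set bs \<subseteq> C" unfolding bs_def by (auto dest: set_takeWhileD)
  have rsne: "rs \<noteq> []" and yN: "y \<in> nodes G" and rsN: "set rs \<subseteq> nodes G"
    and sD: "successively (\<lambda>u w. (u, w) \<in> dedges G) rs"
    and bc: "if b then (y, hd rs) \<in> bedges G else hd rs = y"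
    using ht unfolding is_htrek_def by auto
  have lpN: "last rs \<in> nodes GC" using lp v unfolding nodes_GC by auto
  show ?thesis
  proof (cases "as = []")
    case True
    then have rsC: "set rs \<subseteq> C" using rs bsC by simp
    have hdC: "hd rs \<in> C" using rsC rsne by auto
    have yC: "y \<in> C"
    proof (cases b)
      case True then show ?thesis using bc hdC closed2 by auto
    next
      case False then show ?thesis using bc hdC by auto
    qed
    have "is_htrek GC y b rs"
      unfolding is_htrek_def
    proof (intro conjI)
      show "rs \<noteq> []" by fact
      show "y \<in> nodes GC" using yC unfolding nodes_GC by auto
      show "set rs \<subseteq> nodes GC" using rsC unfolding nodes_GC by auto
      then show "successively (\<lambda>u w. (u, w) \<in> dedges GC) rs"
      proof -
        have "set (tl rs) \<subseteq> set rs" by (cases rs) auto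
        then show ?thesis
          unfolding dedges_GC using succ_restrict[OF sD \<open>set rs \<subseteq> nodes GC\<close>, of C] rsC by auto
      qed
      show "if b then (y, hd rs) \<in> bedges GC else hd rs = y"
        using bc yC hdC unfolding bedges_GC by auto
    qed
    then show ?thesis using yC by blast
  next
    case False
    have dne: "dropWhile (\<lambda>x. x\<in>C) (rev rs) \<noteq> []" using False unfolding as_def by auto
    have laC: "last as \<notin> C" unfolding as_def last_rev using hd_dropWhile[OF dne] .
    have laS: "last as \<in> set rs" using False rs by auto
    have sD2: "successively (\<lambda>u w. (u, w) \<in> dedges G) bs"
      and ed: "bs = [] \<or> (last as, hd bs) \<in> dedges G"
      using sD False unfolding rs successively_append_iff by auto
    have sD3: "successively (\<lambda>u w. (u, w) \<in> dedges G) (last as # bs)"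
      using sD2 ed by (auto simp: successively_Cons)
    have lr: "last (last as # bs) = last rs"
      using rs False by (cases "bs = []") auto
    have laN: "last as \<in> nodes GC"
    proof (cases "bs = []")
      case True then show ?thesis using lr lpN by simp
    next
      case False
      then have "hd bs \<in> C" using bsC by auto
      moreover have "last as \<in> pa G (hd bs)" using ed False unfolding pa_def by auto
      ultimately show ?thesis unfolding nodes_GC by auto
    qed
    have setN: "set (last as # bs) \<subseteq> nodes GC" using laN bsC unfolding nodes_GC by auto
    have "is_htrek GC (last as) False (last as # bs)"
      unfolding is_htrek_def
    proof (intro conjI)
      show "successively (\<lambda>u w. (u, w) \<in> dedges GC) (last as # bs)"
        unfolding dedges_GC using succ_restrict[OF sD3 setN, of C] bsC by simp
    qed (use laN setN in auto)
    moreover have "set (last as # bs) \<subseteq> set rs" using laS rs by auto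
    ultimately show ?thesis using lr laS laC by blast
  qed
qed

lemma trunc_HTC:
  assumes v: "v \<in> C" and H: "HTC G Y v"
  shows "\<exists>Y'. HTC GC Y' v \<and> Y' \<inter> C \<subseteq> Y"
proof -
  from H obtain h where h1: "\<forall>x\<in>Y. is_htrek G x (fst (h x)) (snd (h x))"
    and h2: "bij_betw (\<lambda>x. last (snd (h x))) Y (pa G v)"
    and h3: "\<forall>x\<in>Y. \<forall>x'\<in>Y. x \<noteq> x' \<longrightarrow> set (snd (h x)) \<inter> set (snd (h x')) = {}"
    unfolding HTC_def htrek_system_def by blast
  have YD: "Y \<inter> ({v} \<union> sib G v) = {}" using H unfolding HTC_def by auto
  have "\<forall>x\<in>Y. \<exists>t. is_htrek GC (fst t) (fst (snd t)) (snd (snd t))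
      \<and> last (snd (snd t)) = last (snd (h x)) \<and> set (snd (snd t)) \<subseteq> set (snd (h x))
      \<and> ((fst t \<in> set (snd (h x)) \<and> fst t \<notin> C) \<or> (fst t = x \<and> x \<in> C))" (is "\<forall>x\<in>Y. \<exists>t. ?P x t")
  proof
    fix x assume x: "x \<in> Y"
    have "last (snd (h x)) \<in> pa G v" using h2 x by (auto dest: bij_betwE)
    from trunc_one[OF v h1[rule_format, OF x] this] obtain y' b' rs' where
      "is_htrek GC y' b' rs' \<and> last rs' = last (snd (h x)) \<and> set rs' \<subseteq> set (snd (h x))
           \<and> ((y' \<in> set (snd (h x)) \<and> y' \<notin> C) \<or> (y' = x \<and> x \<in> C))" by blast
    then show "\<exists>t. ?P x t" by (intro exI[of _ "(y',b',rs')"]) simp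
  qed
  from bchoice[OF this] obtain f where f: "\<forall>x\<in>Y. is_htrek GC (fst (f x)) (fst (snd (f x))) (snd (snd (f x)))
      \<and> last (snd (snd (f x))) = last (snd (h x)) \<and> set (snd (snd (f x))) \<subseteq> set (snd (h x))
      \<and> ((fst (f x) \<in> set (snd (h x)) \<and> fst (f x) \<notin> C) \<or> (fst (f x) = x \<and> x \<in> C))"
    by blast
  define g where "g x = fst (f x)" for x
  define b' where "b' x = fst (snd (f x))" for x
  define r' where "r' x = snd (snd (f x))" for x
  have F1: "is_htrek GC (g x) (b' x) (r' x)" if "x \<in> Y" for x
    using f that unfolding g_def b'_def r'_def by blast
  have F2: "last (r' x) = last (snd (h x))" if "x \<in> Y" for x
    using f that unfolding r'_def by blast
  have F3: "set (r' x) \<subseteq> set (snd (h x))" if "x \<in> Y" for x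
    using f that unfolding r'_def by blast
  have F4: "(g x \<in> set (snd (h x)) \<and> g x \<notin> C) \<or> (g x = x \<and> x \<in> C)" if "x \<in> Y" for x
    using f that unfolding g_def by blast
  have inj: "inj_on g Y"
  proof (rule inj_onI)
    fix x1 x2 assume a: "x1 \<in> Y" "x2 \<in> Y" "g x1 = g x2"
    show "x1 = x2"
    proof (rule ccontr)
      assume ne: "x1 \<noteq> x2"
      have d: "set (snd (h x1)) \<inter> set (snd (h x2)) = {}" using h3 a ne by auto
      show False using F4[OF a(1)] F4[OF a(2)] d a(3) ne by auto
    qed
  qed
  define Y' where "Y' = g ` Y"
  define h' where "h' z = (b' (inv_into Y g z), r' (inv_into Y g z))" for z
  have ginv: "x \<in> Y \<Longrightarrow> inv_into Y g (g x) = x" for x using inj by (simp add: inv_into_f_f)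
  have sys: "htrek_system GC Y' (pa G v)"
    unfolding htrek_system_def
  proof (intro exI conjI ballI impI)
    fix z assume "z \<in> Y'"
    then obtain x where x: "x \<in> Y" "z = g x" unfolding Y'_def by auto
    show "is_htrek GC z (fst (h' z)) (snd (h' z))"
      using F1[OF x(1)] x ginv[OF x(1)] unfolding h'_def by simp
  next
    have b1: "bij_betw (inv_into Y g) Y' Y"
      unfolding Y'_def by (rule bij_betw_inv_into[OF inj_on_imp_bij_betw[OF inj]])
    have "bij_betw ((\<lambda>x. last (snd (h x))) \<circ> inv_into Y g) Y' (pa G v)"
      by (rule bij_betw_trans[OF b1 h2])
    moreover have "bij_betw (\<lambda>z. last (snd (h' z))) Y' (pa G v) = bij_betw ((\<lambda>x. last (snd (h x))) \<circ> inv_into Y g) Y' (pa G v)"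
    proof (rule bij_betw_cong)
      fix z assume "z \<in> Y'"
      then obtain x where x: "x \<in> Y" "z = g x" unfolding Y'_def by auto
      show "last (snd (h' z)) = ((\<lambda>x. last (snd (h x))) \<circ> inv_into Y g) z"
        using F2[OF x(1)] x ginv[OF x(1)] unfolding h'_def by simp
    qed
    ultimately show "bij_betw (\<lambda>z. last (snd (h' z))) Y' (pa G v)" by simp
  next
    fix z z' assume "z \<in> Y'" "z' \<in> Y'" "z \<noteq> z'"
    then obtain x x' where x: "x \<in> Y" "z = g x" "x' \<in> Y" "z' = g x'" "x \<noteq> x'"
      unfolding Y'_def by auto
    then have "set (snd (h x)) \<inter> set (snd (h x')) = {}" using h3 by auto
    moreover have "snd (h' z) = r' x" "snd (h' z') = r' x'"
      using x ginv unfolding h'_def by auto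
    ultimately show "set (snd (h' z)) \<inter> set (snd (h' z')) = {}"
      using F3[OF x(1)] F3[OF x(3)] by auto
  qed
  have card: "card Y' = card (pa G v)"
    using sys unfolding htrek_system_def by (auto intro: bij_betw_same_card)
  have sub: "Y' \<subseteq> nodes GC"
    using F1 unfolding Y'_def is_htrek_def by auto
  have disj: "Y' \<inter> ({v} \<union> sib GC v) = {}"
  proof -
    { fix x assume x: "x \<in> Y" "g x \<in> {v} \<union> sib G v"
      then have "g x \<in> C" using v sib_sub by auto
      then have "g x = x" using F4[OF x(1)] by auto
      with x YD have False by auto }
    then show ?thesis using sib_eq v unfolding Y'_def by auto
  qed
  have YC: "Y' \<inter> C \<subseteq> Y"
  proof
    fix z assume "z \<in> Y' \<inter> C"
    then obtain x where x: "x \<in> Y" "z = g x" "g x \<in> C" unfolding Y'_def by auto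
    then show "z \<in> Y" using F4[OF x(1)] by auto
  qed
  show ?thesis using sys card sub disj YC pa_eq v unfolding HTC_def by auto
qed

lemma trunc_family:
  assumes "\<forall>v\<in>nodes G. HTC G (Y v) v"
  obtains Y' where "\<forall>v\<in>nodes GC. HTC GC (Y' v) v" "\<forall>v. Y' v \<inter> C \<subseteq> Y v"
    "\<forall>v. v \<notin> C \<longrightarrow> Y' v = {}"
proof -
  have "\<forall>v\<in>C. \<exists>Y'. HTC GC Y' v \<and> Y' \<inter> C \<subseteq> Y v" using trunc_HTC assms CC by blast
  from bchoice[OF this] obtain Y0 where Y0: "\<forall>v\<in>C. HTC GC (Y0 v) v \<and> Y0 v \<inter> C \<subseteq> Y v" by blast
  define Y' where "Y' v = (if v \<in> C then Y0 v else {})" for v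
  have "\<forall>v\<in>nodes GC. HTC GC (Y' v) v" using Y0 HTC_empty unfolding Y'_def by auto
  moreover have "\<forall>v. Y' v \<inter> C \<subseteq> Y v" using Y0 unfolding Y'_def by auto
  moreover have "\<forall>v. v \<notin> C \<longrightarrow> Y' v = {}" unfolding Y'_def by auto
  ultimately show ?thesis using that by blast
qed

lemma ident_comp: assumes "HTC_identifiable G" shows "HTC_identifiable GC"
proof -
  obtain Y r where r: "strict_linear_order_on (nodes G) r"
    and Yc: "\<forall>v\<in>nodes G. HTC G (Y v) v \<and> (\<forall>w\<in>Y v \<inter> htr G v. (w,v)\<in>r)"
    using assms unfolding HTC_identifiable_def by blast
  obtain Y' where Y1: "\<forall>v\<in>nodes GC. HTC GC (Y' v) v" and Y2: "\<forall>v. Y' v \<inter> C \<subseteq> Y v"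
    and Y3: "\<forall>v. v \<notin> C \<longrightarrow> Y' v = {}"
    using trunc_family Yc by blast
  define r' where "r' = {(a,b). a \<in> nodes GC \<and> b \<in> nodes GC \<and> ((a\<notin>C \<and> b\<in>C) \<or> ((a\<in>C \<longleftrightarrow> b\<in>C) \<and> (a,b)\<in>r))}"
  have tr: "trans r" and ir: "irrefl r" and to: "total_on (nodes G) r"
    using r unfolding strict_linear_order_on_def by auto
  have "strict_linear_order_on (nodes GC) r'"
    unfolding strict_linear_order_on_def
  proof (intro conjI)
    show "trans r'" unfolding r'_def trans_def using tr by (auto dest: transD)
    show "irrefl r'" unfolding r'_def irrefl_def using ir by (auto simp: irrefl_def)
    show "total_on (nodes GC) r'" unfolding r'_def total_on_def
      using to nodes_sub unfolding total_on_def by blast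
  qed
  moreover have "\<forall>v\<in>nodes GC. HTC GC (Y' v) v \<and> (\<forall>w\<in>Y' v \<inter> htr GC v. (w,v)\<in>r')"
  proof
    fix v assume v: "v \<in> nodes GC"
    show "HTC GC (Y' v) v \<and> (\<forall>w\<in>Y' v \<inter> htr GC v. (w,v)\<in>r')"
    proof (intro conjI ballI)
      show H: "HTC GC (Y' v) v" using Y1 v by auto
      fix w assume w: "w \<in> Y' v \<inter> htr GC v"
      then have vC: "v \<in> C" using Y3 by auto
      have wN: "w \<in> nodes GC" using H w unfolding HTC_def by auto
      show "(w, v) \<in> r'"
      proof (cases "w \<in> C")
        case False then show ?thesis using wN v vC unfolding r'_def by auto
      next
        case True
        then have "w \<in> Y v" using Y2 w by auto
        moreover have "w \<in> htr G v" using htr_sub[OF vC] w by auto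
        moreover have "v \<in> nodes G" using vC CC by auto
        ultimately have "(w,v) \<in> r" using Yc by auto
        then show ?thesis using True vC wN v unfolding r'_def by auto
      qed
    qed
  qed
  ultimately show ?thesis unfolding HTC_identifiable_def by blast
qed

lemma noninf_comp: assumes "\<not> HTC_infinite_to_one G" shows "\<not> HTC_infinite_to_one GC"
proof -
  obtain Y where Yc: "\<forall>v\<in>nodes G. HTC G (Y v) v"
    and np: "\<not> (\<exists>v\<in>nodes G. \<exists>w\<in>nodes G. v \<in> Y w \<and> w \<in> Y v)"
    using assms unfolding HTC_infinite_to_one_def by blast
  obtain Y' where Y1: "\<forall>v\<in>nodes GC. HTC GC (Y' v) v" and Y2: "\<forall>v. Y' v \<inter> C \<subseteq> Y v"
    and Y3: "\<forall>v. v \<notin> C \<longrightarrow> Y' v = {}"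
    using trunc_family Yc by blast
  have "\<forall>v\<in>nodes GC. Y' v \<subseteq> nodes GC" using Y1 unfolding HTC_def by auto
  moreover have "\<not> (\<exists>v\<in>nodes GC. \<exists>w\<in>nodes GC. v \<in> Y' w \<and> w \<in> Y' v)"
  proof
    assume "\<exists>v\<in>nodes GC. \<exists>w\<in>nodes GC. v \<in> Y' w \<and> w \<in> Y' v"
    then obtain v w where a: "v \<in> Y' w" "w \<in> Y' v" by blast
    then have "v \<in> C" "w \<in> C" using Y3 by auto
    then have "v \<in> Y w" "w \<in> Y v" "v \<in> nodes G" "w \<in> nodes G" using a Y2 CC by auto
    then show False using np by blast
  qed
  ultimately show ?thesis using Y1 unfolding HTC_infinite_to_one_def by blast
qed

end

lemma comps_ctx: assumes "mixed_graph G" "C \<in> mixed_comps G" shows "comp_ctx G C"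
proof -
  obtain c where C: "C = {w \<in> nodes G. (c, w) \<in> (bedges G)\<^sup>*}"
    using assms(2) unfolding mixed_comps_def by blast
  have B: "bedges G \<subseteq> nodes G \<times> nodes G" using assms(1) unfolding mixed_graph_def by auto
  show ?thesis
  proof
    show "mixed_graph G" by fact
    show "C \<subseteq> nodes G" using C by auto
    fix u x assume "u \<in> C" "(u, x) \<in> bedges G"
    then show "x \<in> C" using C B by (auto intro: rtrancl_into_rtrancl)
  qed
qed

definition compof :: "'a mgraph \<Rightarrow> 'a \<Rightarrow> 'a set" where
  "compof G v = {w \<in> nodes G. (v, w) \<in> (bedges G)\<^sup>*}"

lemma compof_in: "v \<in> nodes G \<Longrightarrow> compof G v \<in> mixed_comps G \<and> v \<in> compof G v"
  unfolding compof_def mixed_comps_def by auto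

lemma compof_eq: assumes "mixed_graph G" "v \<in> compof G u" shows "compof G v = compof G u"
proof -
  have s: "sym ((bedges G)\<^sup>*)" using assms(1) sym_rtrancl unfolding mixed_graph_def by blast
  have "(u, v) \<in> (bedges G)\<^sup>*" using assms(2) unfolding compof_def by auto
  moreover then have "(v, u) \<in> (bedges G)\<^sup>*" using s by (meson symD)
  ultimately show ?thesis unfolding compof_def by (meson rtrancl_trans)
qed

lemma combine:
  assumes mg: "mixed_graph G" and ac: "acyclic_mg G"
    and all: "\<forall>C\<in>mixed_comps G. \<not> HTC_infinite_to_one (comp_graph G C)"
  shows "\<not> HTC_infinite_to_one G"
proof -
  have "\<forall>C\<in>mixed_comps G. \<exists>Y. (\<forall>v\<in>nodes (comp_graph G C). HTC (comp_graph G C) (Y v) v)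
        \<and> \<not> (\<exists>v\<in>nodes (comp_graph G C). \<exists>w\<in>nodes (comp_graph G C). v \<in> Y w \<and> w \<in> Y v)"
    using all unfolding HTC_infinite_to_one_def by blast
  from bchoice[OF this] obtain F where F: "\<forall>C\<in>mixed_comps G.
      (\<forall>v\<in>nodes (comp_graph G C). HTC (comp_graph G C) (F C v) v)
        \<and> \<not> (\<exists>v\<in>nodes (comp_graph G C). \<exists>w\<in>nodes (comp_graph G C). v \<in> F C w \<and> w \<in> F C v)"
    by blast
  define Y where "Y v = F (compof G v) v" for v
  have inGC: "v \<in> nodes (comp_graph G (compof G v))" if "v \<in> nodes G" for v
    using compof_in[OF that] by (simp add: comp_graph_def Let_def)
  have HG: "HTC G (Y v) v" if v: "v \<in> nodes G" for v
  proof -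
    interpret comp_ctx G "compof G v" using comps_ctx mg compof_in[OF v] by blast
    show ?thesis using HTC_lift compof_in[OF v] F inGC[OF v] unfolding Y_def by blast
  qed
  have srcp: "(v, w) \<in> (dedges G)\<^sup>+" if "w \<in> nodes G" "v \<in> Y w" "v \<notin> compof G w" for v w
  proof -
    interpret comp_ctx G "compof G w" using comps_ctx mg compof_in[OF that(1)] by blast
    show ?thesis using src_path[of w "Y w" v] compof_in[OF that(1)] F inGC[OF that(1)] that
      unfolding Y_def by blast
  qed
  have "\<forall>v\<in>nodes G. Y v \<subseteq> nodes G" using HG unfolding HTC_def by auto
  moreover have "\<not> (\<exists>v\<in>nodes G. \<exists>w\<in>nodes G. v \<in> Y w \<and> w \<in> Y v)"
  proof
    assume "\<exists>v\<in>nodes G. \<exists>w\<in>nodes G. v \<in> Y w \<and> w \<in> Y v"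
    then obtain v w where a: "v \<in> nodes G" "w \<in> nodes G" "v \<in> Y w" "w \<in> Y v" by blast
    show False
    proof (cases "compof G v = compof G w")
      case True
      have "v \<in> nodes (comp_graph G (compof G w))" "w \<in> nodes (comp_graph G (compof G w))"
        using inGC a True by metis+
      moreover have "v \<in> F (compof G w) w" "w \<in> F (compof G w) v" using a True unfolding Y_def by auto
      moreover have "compof G w \<in> mixed_comps G" using compof_in[OF a(2)] by auto
      ultimately show False using F by blast
    next
      case False
      then have "v \<notin> compof G w" "w \<notin> compof G v" using compof_eq[OF mg] by metis+
      then have "(v, w) \<in> (dedges G)\<^sup>+" "(w, v) \<in> (dedges G)\<^sup>+" using srcp a by auto
      then have "(v, v) \<in> (dedges G)\<^sup>+" by auto
      then show False using ac unfolding acyclic_mg_def acyclic_def by blast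
    qed
  qed
  ultimately show ?thesis using HG unfolding HTC_infinite_to_one_def by blast
qed

theorem mainTheorem12:
  fixes G :: "'a mgraph"
  assumes "mixed_graph G" and "acyclic_mg G"
  shows "(HTC_identifiable G \<longrightarrow> (\<forall>C\<in>mixed_comps G. HTC_identifiable (comp_graph G C)))
       \<and> (HTC_infinite_to_one G \<longleftrightarrow> (\<exists>C\<in>mixed_comps G. HTC_infinite_to_one (comp_graph G C)))"
proof (intro conjI impI ballI iffI)
  fix C assume "HTC_identifiable G" "C \<in> mixed_comps G"
  then show "HTC_identifiable (comp_graph G C)"
    using comp_ctx.ident_comp[OF comps_ctx[OF assms(1)]] by blast
next
  assume "HTC_infinite_to_one G"
  then show "\<exists>C\<in>mixed_comps G. HTC_infinite_to_one (comp_graph G C)"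
    using combine[OF assms] by blast
next
  assume "\<exists>C\<in>mixed_comps G. HTC_infinite_to_one (comp_graph G C)"
  then show "HTC_infinite_to_one G"
    using comp_ctx.noninf_comp[OF comps_ctx[OF assms(1)]] by blast
qed

end
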